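(* Let $G$ be an infinite connected simple undirected graph with globally bounded vertex degree, $\deg(x)\le v<\infty$ for all vertices $x$, and suppose $G$ has internal scaling dimension $D$, i.e. $D_S(x)=D$ for every vertex $x$. Then the (unpurified) clique graph $G_{cl}$ also has internal scaling dimension $D$: for every clique $C$ of $G$, the limit $\lim_{n\to\infty}\ln(\#U^{cl}_n(C))/\ln n$ exists and equals $D$.
   Context: Graphs are simple and undirected with graph metric $d$ (minimal number of edges of a connecting path). For a vertex $x$, $U_n(x)=\{y:d(x,y)\le n\}$ and $D_n(x)=\ln(\#U_n(x))/\ln n$. The lower and upper internal scaling dimensions at $x$ are $\underline D_S(x)=\liminf_{n\to\infty}D_n(x)$ and $\overline D_S(x)=\limsup_{n\to\infty}D_n(x)$; if they coincide the common value is $D_S(x)$, and if $D_S(x)=D$ for all $x$ the graph has internal scaling dimension $D$. A clique is a maximal complete subgraph. The clique graph $G_{cl}$ has as vertices the cliques of $G$, two distinct cliques being adjacent iff they share at least one vertex; $U^{cl}_n(C)$ is the ball of radius $n$ around $C$ in the graph metric of $G_{cl}$. *)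

theory Defs
  imports Complex_Main "HOL-Library.Extended_Nat"
begin

definition simple_graph :: "'a set \<Rightarrow> ('a \<Rightarrow> 'a \<Rightarrow> bool) \<Rightarrow> bool" where
  "simple_graph V E \<longleftrightarrow> (\<forall>x y. E x y \<longrightarrow> x \<in> V \<and> y \<in> V \<and> x \<noteq> y \<and> E y x)"

inductive walk :: "'a set \<Rightarrow> ('a \<Rightarrow> 'a \<Rightarrow> bool) \<Rightarrow> 'a \<Rightarrow> 'a \<Rightarrow> nat \<Rightarrow> bool"
  for V E where
  walk_refl: "x \<in> V \<Longrightarrow> walk V E x x 0"
| walk_step: "E x z \<Longrightarrow> x \<in> V \<Longrightarrow> walk V E z y n \<Longrightarrow> walk V E x y (Suc n)"

text \<open>Graph metric: minimal number of edges of a connecting path (infinity if none).\<close>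
definition gdist :: "'a set \<Rightarrow> ('a \<Rightarrow> 'a \<Rightarrow> bool) \<Rightarrow> 'a \<Rightarrow> 'a \<Rightarrow> enat" where
  "gdist V E x y = (INF n \<in> {n. walk V E x y n}. enat n)"

definition connected_graph :: "'a set \<Rightarrow> ('a \<Rightarrow> 'a \<Rightarrow> bool) \<Rightarrow> bool" where
  "connected_graph V E \<longleftrightarrow> (\<forall>x\<in>V. \<forall>y\<in>V. gdist V E x y < \<infinity>)"

definition bounded_degree :: "'a set \<Rightarrow> ('a \<Rightarrow> 'a \<Rightarrow> bool) \<Rightarrow> bool" where
  "bounded_degree V E \<longleftrightarrow> (\<exists>v::nat. \<forall>x\<in>V. finite {y. E x y} \<and> card {y. E x y} \<le> v)"

definition gball :: "'a set \<Rightarrow> ('a \<Rightarrow> 'a \<Rightarrow> bool) \<Rightarrow> 'a \<Rightarrow> nat \<Rightarrow> 'a set" where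
  "gball V E x n = {y \<in> V. gdist V E x y \<le> enat n}"

definition Dn :: "'a set \<Rightarrow> ('a \<Rightarrow> 'a \<Rightarrow> bool) \<Rightarrow> 'a \<Rightarrow> nat \<Rightarrow> real" where
  "Dn V E x n = ln (real (card (gball V E x n))) / ln (real n)"

definition has_scaling_dim :: "'a set \<Rightarrow> ('a \<Rightarrow> 'a \<Rightarrow> bool) \<Rightarrow> real \<Rightarrow> bool" where
  "has_scaling_dim V E D \<longleftrightarrow> (\<forall>x\<in>V. (\<lambda>n. Dn V E x n) \<longlonglongrightarrow> D)"

definition complete_set :: "'a set \<Rightarrow> ('a \<Rightarrow> 'a \<Rightarrow> bool) \<Rightarrow> 'a set \<Rightarrow> bool" where
  "complete_set V E C \<longleftrightarrow> C \<subseteq> V \<and> (\<forall>x\<in>C. \<forall>y\<in>C. x \<noteq> y \<longrightarrow> E x y)"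

definition is_clique :: "'a set \<Rightarrow> ('a \<Rightarrow> 'a \<Rightarrow> bool) \<Rightarrow> 'a set \<Rightarrow> bool" where
  "is_clique V E C \<longleftrightarrow> complete_set V E C \<and>
     (\<forall>C'. complete_set V E C' \<and> C \<subseteq> C' \<longrightarrow> C' = C)"

definition cliques :: "'a set \<Rightarrow> ('a \<Rightarrow> 'a \<Rightarrow> bool) \<Rightarrow> 'a set set" where
  "cliques V E = {C. is_clique V E C}"

definition clique_adj :: "'a set \<Rightarrow> 'a set \<Rightarrow> bool" where
  "clique_adj C C' \<longleftrightarrow> C \<noteq> C' \<and> C \<inter> C' \<noteq> {}"

end

theory Submission
  imports Defs "HOL-Real_Asymp.Real_Asymp"
begin

lemma walk_in: "walk V E x y n \<Longrightarrow> x \<in> V \<and> y \<in> V"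
  by (induction rule: walk.induct) auto

lemma gdist_le_iff: "gdist V E x y \<le> enat n \<longleftrightarrow> (\<exists>m\<le>n. walk V E x y m)"
proof
  assume "gdist V E x y \<le> enat n"
  hence "(INF m \<in> {m. walk V E x y m}. enat m) < enat (Suc n)"
    unfolding gdist_def by (rule le_less_trans) simp
  then obtain m where "walk V E x y m" "enat m < enat (Suc n)"
    by (auto simp: INF_less_iff)
  thus "\<exists>m\<le>n. walk V E x y m" using less_Suc_eq_le by auto
next
  assume "\<exists>m\<le>n. walk V E x y m"
  then obtain m where "m \<le> n" "walk V E x y m" by auto
  hence "gdist V E x y \<le> enat m" unfolding gdist_def by (auto intro: INF_lower)
  thus "gdist V E x y \<le> enat n" using \<open>m\<le>n\<close> by (meson enat_ord_simps(1) order_trans)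
qed

lemma gball_eq: "gball V E x n = {y. \<exists>m\<le>n. walk V E x y m}"
  unfolding gball_def gdist_le_iff by (auto dest: walk_in)

lemma ball_finite:
  assumes "\<And>x. finite {y. E x y}"
  shows "finite {y. \<exists>m\<le>n. walk V E x y m}"
proof (induction n arbitrary: x)
  case 0
  have "{y. \<exists>m\<le>0. walk V E x y m} \<subseteq> {x}" by (auto elim: walk.cases)
  thus ?case using finite_subset by blast
next
  case (Suc n)
  have "{y. \<exists>m\<le>Suc n. walk V E x y m} \<subseteq> {x} \<union> (\<Union>z\<in>{z. E x z}. {y. \<exists>m\<le>n. walk V E z y m})"
  proof
    fix y assume "y \<in> {y. \<exists>m\<le>Suc n. walk V E x y m}"
    then obtain m where m: "m \<le> Suc n" "walk V E x y m" by auto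
    from m(2) show "y \<in> {x} \<union> (\<Union>z\<in>{z. E x z}. {y. \<exists>m\<le>n. walk V E z y m})"
      using m(1) by (cases) auto
  qed
  moreover have "finite ({x} \<union> (\<Union>z\<in>{z. E x z}. {y. \<exists>m\<le>n. walk V E z y m}))"
    using Suc assms by auto
  ultimately show ?case using finite_subset by blast
qed

lemma limit_lemma:
  fixes a b :: "nat \<Rightarrow> real"
  assumes a1: "\<And>n. a n \<ge> 1" and b1: "\<And>n. b n \<ge> 1" and ab: "\<And>n. a n \<le> p * b n"
    and ba: "\<And>n. b n \<le> q * a (Suc n)" and p: "p > 0" and q: "q > 0"
    and lim: "(\<lambda>n. ln (a n) / ln (real n)) \<longlonglongrightarrow> D"
  shows "(\<lambda>n. ln (b n) / ln (real n)) \<longlonglongrightarrow> D"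
proof (rule tendsto_sandwich)
  have lninf: "filterlim (\<lambda>n::nat. ln (real n)) at_infinity sequentially"
    by (rule filterlim_at_top_imp_at_infinity) real_asymp
  have z1: "(\<lambda>n. ln p / ln (real n)) \<longlonglongrightarrow> 0"
    by (rule tendsto_divide_0[OF tendsto_const lninf])
  have z2: "(\<lambda>n. ln q / ln (real n)) \<longlonglongrightarrow> 0"
    by (rule tendsto_divide_0[OF tendsto_const lninf])
  have r: "(\<lambda>n::nat. ln (real (Suc n)) / ln (real n)) \<longlonglongrightarrow> 1"
    by real_asymp
  have ls: "(\<lambda>n. ln (a (Suc n)) / ln (real (Suc n))) \<longlonglongrightarrow> D"
    using LIMSEQ_Suc[OF lim] by simp
  show "(\<lambda>n. ln (a n) / ln (real n) - ln p / ln (real n)) \<longlonglongrightarrow> D"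
    using tendsto_diff[OF lim z1] by simp
  show "(\<lambda>n. ln q / ln (real n) + (ln (a (Suc n)) / ln (real (Suc n))) * (ln (real (Suc n)) / ln (real n))) \<longlonglongrightarrow> D"
    using tendsto_add[OF z2 tendsto_mult[OF ls r]] by simp
  show "\<forall>\<^sub>F n in sequentially. ln (a n) / ln (real n) - ln p / ln (real n) \<le> ln (b n) / ln (real n)"
    using eventually_ge_at_top[of 2]
  proof eventually_elim
    case (elim n)
    hence lnpos: "ln (real n) > 0" by simp
    have "0 < p * b n" using p b1[of n] by simp
    hence "ln (a n) \<le> ln (p * b n)" using ab[of n] a1[of n] by simp
    also have "\<dots> = ln p + ln (b n)" using p b1[of n] by (simp add: ln_mult)
    finally have "ln (a n) - ln p \<le> ln (b n)" by simp
    hence "(ln (a n) - ln p) / ln (real n) \<le> ln (b n) / ln (real n)"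
      using lnpos by (simp add: divide_right_mono)
    thus ?case by (simp add: diff_divide_distrib)
  qed
  show "\<forall>\<^sub>F n in sequentially. ln (b n) / ln (real n) \<le> ln q / ln (real n) + (ln (a (Suc n)) / ln (real (Suc n))) * (ln (real (Suc n)) / ln (real n))"
    using eventually_ge_at_top[of 2]
  proof eventually_elim
    case (elim n)
    hence lnpos: "ln (real n) > 0" by simp
    have p2: "ln (real (Suc n)) > 0" using elim by simp
    have "0 < q * a (Suc n)" using q a1[of "Suc n"] by simp
    hence "ln (b n) \<le> ln (q * a (Suc n))" using ba[of n] b1[of n] by simp
    also have "\<dots> = ln q + ln (a (Suc n))" using q a1[of "Suc n"] by (simp add: ln_mult)
    finally have "ln (b n) / ln (real n) \<le> (ln q + ln (a (Suc n))) / ln (real n)"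
      using lnpos by (simp add: divide_right_mono)
    also have "\<dots> = ln q / ln (real n) + (ln (a (Suc n)) / ln (real (Suc n))) * (ln (real (Suc n)) / ln (real n))"
      using p2 by (simp add: add_divide_distrib)
    finally show ?case .
  qed
qed

theorem mainTheorem4:
  fixes V :: "'a set" and E :: "'a \<Rightarrow> 'a \<Rightarrow> bool" and D :: real
  assumes "simple_graph V E"
    and "infinite V"
    and "connected_graph V E"
    and "bounded_degree V E"
    and "has_scaling_dim V E D"
  shows "has_scaling_dim (cliques V E) clique_adj D"
proof -
  obtain v where v: "\<forall>x\<in>V. finite {y. E x y} \<and> card {y. E x y} \<le> v"
    using assms(4) unfolding bounded_degree_def by auto
  have sg: "\<And>x y. E x y \<Longrightarrow> x \<in> V \<and> y \<in> V \<and> x \<noteq> y \<and> E y x"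
    using assms(1) unfolding simple_graph_def by blast
  have Nempty: "x \<notin> V \<Longrightarrow> {y. E x y} = {}" for x using sg by auto
  have finN: "finite {y. E x y}" for x
    using v Nempty by (cases "x \<in> V") auto
  have cardN: "card {y. E x y} \<le> v" for x
    using v Nempty by (cases "x \<in> V") auto
  define Cl where "Cl = cliques V E"
  have compl_sub: "T \<subseteq> insert y {z. E y z}" if "complete_set V E T" "y \<in> T" for T y
    using that unfolding complete_set_def by auto
  have fin_ins: "finite (insert y {z. E y z}) \<and> card (insert y {z. E y z}) \<le> v + 1" for y
    using finN[of y] cardN[of y] by (simp add: card_insert_le_m1)
  have cl_sub: "K \<subseteq> V" if "K \<in> Cl" for K
    using that unfolding Cl_def cliques_def is_clique_def complete_set_def by auto
  have cl_ne: "K \<noteq> {}" if "K \<in> Cl" for K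
  proof
    assume "K = {}"
    obtain x where "x \<in> V" using assms(2) by (metis finite.emptyI ex_in_conv)
    hence "complete_set V E {x}" unfolding complete_set_def by auto
    with that \<open>K = {}\<close> show False unfolding Cl_def cliques_def is_clique_def by blast
  qed
  have cl_fin: "finite K \<and> card K \<le> v + 1" if KC: "K \<in> Cl" for K
  proof -
    obtain y where y: "y \<in> K" using cl_ne[OF KC] by auto
    have "complete_set V E K" using KC unfolding Cl_def cliques_def is_clique_def by auto
    hence "K \<subseteq> insert y {z. E y z}" using compl_sub y by blast
    thus ?thesis using fin_ins[of y] by (meson card_mono finite_subset order_trans)
  qed
  have extend: "\<exists>K\<in>Cl. S \<subseteq> K" if S: "complete_set V E S" "y \<in> S" for S y
  proof -
    let ?P = "\<lambda>T. complete_set V E T \<and> S \<subseteq> T"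
    have bnd: "\<forall>T. ?P T \<longrightarrow> card T \<le> v + 1"
    proof (intro allI impI)
      fix T assume "?P T"
      hence "T \<subseteq> insert y {z. E y z}" using compl_sub S by blast
      thus "card T \<le> v + 1" using fin_ins[of y] by (meson card_mono order_trans)
    qed
    have Ex: "\<exists>T. ?P T \<and> (\<forall>T'. ?P T' \<longrightarrow> card T' \<le> card T)"
    proof (rule ex_has_greatest_nat[of ?P S card "v+2"])
      show "?P S" using S(1) by simp
      show "\<forall>T. ?P T \<longrightarrow> card T < v + 2"
      proof (intro allI impI)
        fix T assume "?P T"
        hence "card T \<le> v + 1" using bnd by blast
        thus "card T < v + 2" by simp
      qed
    qed
    obtain T where T: "?P T" "\<forall>T'. ?P T' \<longrightarrow> card T' \<le> card T"
      using Ex by blast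
    have "is_clique V E T"
      unfolding is_clique_def
    proof (intro conjI allI impI)
      show "complete_set V E T" using T(1) by simp
      fix C' assume C': "complete_set V E C' \<and> T \<subseteq> C'"
      hence "?P C'" using T(1) by auto
      hence "card C' \<le> card T" using T(2) by blast
      moreover have "finite C'"
      proof -
        have "y \<in> C'" using C' T(1) S(2) by blast
        hence "C' \<subseteq> insert y {z. E y z}" using compl_sub C' by blast
        thus ?thesis using fin_ins[of y] finite_subset by blast
      qed
      ultimately show "C' = T" using C' card_subset_eq by (metis antisym card_mono)
    qed
    thus ?thesis using T(1) unfolding Cl_def cliques_def by auto
  qed
  have clset: "finite {K\<in>Cl. y \<in> K} \<and> card {K\<in>Cl. y \<in> K} \<le> 2 ^ (v + 1)" for y
  proof -
    have sub: "{K\<in>Cl. y \<in> K} \<subseteq> Pow (insert y {z. E y z})"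
      using compl_sub unfolding Cl_def cliques_def is_clique_def by blast
    have "finite (Pow (insert y {z. E y z}))" using fin_ins by simp
    moreover have "card (Pow (insert y {z. E y z})) \<le> 2 ^ (v + 1)"
    proof -
      have "card (Pow (insert y {z. E y z})) = 2 ^ card (insert y {z. E y z})"
        using fin_ins[of y] by (simp add: card_Pow)
      also have "\<dots> \<le> 2 ^ (v + 1)"
        using fin_ins[of y] by (intro power_increasing) auto
      finally show ?thesis .
    qed
    ultimately show ?thesis using sub by (meson card_mono finite_subset order_trans)
  qed
  have up0: "\<forall>x\<in>C. \<forall>y\<in>K. \<exists>m'\<le>Suc m. walk V E x y m'"
    if "walk Cl clique_adj C K m" for C K m
    using that
  proof (induction rule: walk.induct)
    case (walk_refl C)
    have c: "complete_set V E C" using walk_refl unfolding Cl_def cliques_def is_clique_def by auto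
    show ?case
    proof (intro ballI)
      fix x y assume x: "x \<in> C" and y: "y \<in> C"
      show "\<exists>m'\<le>Suc 0. walk V E x y m'"
      proof (cases "x = y")
        case True
        have "y \<in> V" using y c unfolding complete_set_def by auto
        hence "walk V E x y 0" using True walk.walk_refl by metis
        thus ?thesis by blast
      next
        case False
        hence "E x y" using c x y unfolding complete_set_def by auto
        hence "walk V E x y (Suc 0)" using sg walk.walk_refl walk.walk_step by metis
        thus ?thesis by blast
      qed
    qed
  next
    case (walk_step C Z K m)
    have c: "complete_set V E C" using walk_step(2) unfolding Cl_def cliques_def is_clique_def by auto
    obtain z where z: "z \<in> C" "z \<in> Z" using walk_step(1) unfolding clique_adj_def by auto
    show ?case
    proof (intro ballI)
      fix x y assume x: "x \<in> C" and y: "y \<in> K"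
      obtain m' where m': "m' \<le> Suc m" "walk V E z y m'" using walk_step(4) z(2) y by blast
      show "\<exists>m'\<le>Suc (Suc m). walk V E x y m'"
      proof (cases "x = z")
        case True thus ?thesis using m' le_SucI by blast
      next
        case False
        hence "E x z" using c z x unfolding complete_set_def by auto
        hence "walk V E x y (Suc m')" using sg m'(2) walk.walk_step by metis
        thus ?thesis using m'(1) by (intro exI[of _ "Suc m'"]) simp
      qed
    qed
  qed
  have up: "\<forall>y\<in>K. \<exists>m'\<le>Suc m. walk V E x y m'"
    if "walk Cl clique_adj C K m" "x \<in> C" for C K m x
    using up0[OF that(1)] that(2) by blast
  have down0: "\<forall>C. C \<in> Cl \<and> x \<in> C \<longrightarrow> (\<exists>K\<in>Cl. y \<in> K \<and> (\<exists>m'\<le>m. walk Cl clique_adj C K m'))"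
    if "walk V E x y m" for x y m
    using that
  proof (induction rule: walk.induct)
    case (walk_refl x)
    show ?case
    proof (intro allI impI)
      fix C assume C: "C \<in> Cl \<and> x \<in> C"
      hence w: "walk Cl clique_adj C C 0" using walk.walk_refl by metis
      show "\<exists>K\<in>Cl. x \<in> K \<and> (\<exists>m'\<le>0. walk Cl clique_adj C K m')"
        using C w by blast
    qed
  next
    case (walk_step x z y n)
    show ?case
    proof (intro allI impI)
      fix C assume C: "C \<in> Cl \<and> x \<in> C"
      have "complete_set V E {x, z}" using sg walk_step(1) unfolding complete_set_def by auto
      then obtain K0 where K0: "K0 \<in> Cl" "{x, z} \<subseteq> K0" using extend by blast
      then obtain K m' where K: "K \<in> Cl" "y \<in> K" "m' \<le> n" "walk Cl clique_adj K0 K m'"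
        using walk_step(4) by blast
      show "\<exists>K\<in>Cl. y \<in> K \<and> (\<exists>m'\<le>Suc n. walk Cl clique_adj C K m')"
      proof (cases "C = K0")
        case True thus ?thesis using K le_SucI by blast
      next
        case False
        hence "clique_adj C K0" using K0 C unfolding clique_adj_def by auto
        hence "walk Cl clique_adj C K (Suc m')" using walk.walk_step C K(4) by metis
        thus ?thesis using K by (intro bexI[of _ K]) (auto intro!: exI[of _ "Suc m'"])
      qed
    qed
  qed
  have down: "\<exists>K\<in>Cl. y \<in> K \<and> (\<exists>m'\<le>m. walk Cl clique_adj C K m')"
    if "walk V E x y m" "C \<in> Cl" "x \<in> C" for x y m C
    using down0[OF that(1)] that(2,3) by blast
  show ?thesis unfolding has_scaling_dim_def
  proof
    fix C assume C: "C \<in> cliques V E"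
    hence CCl: "C \<in> Cl" unfolding Cl_def .
    obtain x where x: "x \<in> C" using cl_ne[OF CCl] by auto
    have xV: "x \<in> V" using x cl_sub[OF CCl] by auto
    define A where "A n = gball V E x n" for n
    define B where "B n = gball Cl clique_adj C n" for n
    have Aeq: "A n = {y. \<exists>m\<le>n. walk V E x y m}" for n unfolding A_def gball_eq ..
    have Beq: "B n = {K. \<exists>m\<le>n. walk Cl clique_adj C K m}" for n unfolding B_def gball_eq ..
    have Afin: "finite (A n)" for n unfolding Aeq by (rule ball_finite[OF finN])
    have wx: "walk V E x x 0" using walk.walk_refl xV by metis
    have wC: "walk Cl clique_adj C C 0" using walk.walk_refl CCl by metis
    have xA: "x \<in> A n" for n unfolding Aeq using wx by (intro CollectI exI[of _ 0]) simp
    have CB: "C \<in> B n" for n unfolding Beq using wC by (intro CollectI exI[of _ 0]) simp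
    have BU: "B n \<subseteq> (\<Union>y\<in>A (Suc n). {K\<in>Cl. y \<in> K})" for n
    proof
      fix K assume "K \<in> B n"
      then obtain m where m: "m \<le> n" "walk Cl clique_adj C K m" unfolding Beq by auto
      have KCl: "K \<in> Cl" using walk_in[OF m(2)] by auto
      obtain y where y: "y \<in> K" using cl_ne[OF KCl] by auto
      obtain m' where "m' \<le> Suc m" "walk V E x y m'" using up[OF m(2) x] y by blast
      hence "y \<in> A (Suc n)" unfolding Aeq using m(1) by (intro CollectI exI[of _ m']) auto
      thus "K \<in> (\<Union>y\<in>A (Suc n). {K\<in>Cl. y \<in> K})" using KCl y by blast
    qed
    have Bfin: "finite (B n)" for n
      using BU[of n] Afin[of "Suc n"] clset finite_subset by (metis (no_types, lifting) finite_UN_I)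
    have Bcard: "card (B n) \<le> 2 ^ (v + 1) * card (A (Suc n))" for n
    proof -
      have "card (B n) \<le> card (\<Union>y\<in>A (Suc n). {K\<in>Cl. y \<in> K})"
        using BU[of n] Afin[of "Suc n"] clset by (intro card_mono) auto
      also have "\<dots> \<le> (\<Sum>y\<in>A (Suc n). card {K\<in>Cl. y \<in> K})" by (rule card_UN_le[OF Afin])
      also have "\<dots> \<le> (\<Sum>y\<in>A (Suc n). 2 ^ (v + 1))" using clset by (intro sum_mono) auto
      finally show ?thesis by (simp add: mult.commute)
    qed
    have AU: "A n \<subseteq> (\<Union>K\<in>B n. K)" for n
    proof
      fix y assume "y \<in> A n"
      then obtain m where m: "m \<le> n" "walk V E x y m" unfolding Aeq by auto
      obtain K m' where K: "K \<in> Cl" "y \<in> K" "m' \<le> m" "walk Cl clique_adj C K m'"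
        using down[OF m(2) CCl x] by blast
      hence "K \<in> B n" unfolding Beq using m(1) by (intro CollectI exI[of _ m']) auto
      thus "y \<in> (\<Union>K\<in>B n. K)" using K(2) by blast
    qed
    have Acard: "card (A n) \<le> (v + 1) * card (B n)" for n
    proof -
      have BCl: "B n \<subseteq> Cl" unfolding Beq by (auto dest: walk_in)
      have "card (A n) \<le> card (\<Union>K\<in>B n. K)"
        using AU[of n] Bfin[of n] cl_fin BCl by (intro card_mono) auto
      also have "\<dots> \<le> (\<Sum>K\<in>B n. card K)" by (rule card_UN_le[OF Bfin])
      also have "\<dots> \<le> (\<Sum>K\<in>B n. v + 1)" using cl_fin BCl by (intro sum_mono) auto
      finally show ?thesis by (simp add: mult.commute)
    qed
    have A1: "real (card (A n)) \<ge> 1" for n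
      using xA[of n] Afin[of n] by (metis One_nat_def Suc_leI card_gt_0_iff empty_iff of_nat_1 of_nat_le_iff)
    have B1: "real (card (B n)) \<ge> 1" for n
      using CB[of n] Bfin[of n] by (metis One_nat_def Suc_leI card_gt_0_iff empty_iff of_nat_1 of_nat_le_iff)
    have lim: "(\<lambda>n. ln (real (card (A n))) / ln (real n)) \<longlonglongrightarrow> D"
      using assms(5) xV unfolding has_scaling_dim_def Dn_def A_def by blast
    have "(\<lambda>n. ln (real (card (B n))) / ln (real n)) \<longlonglongrightarrow> D"
    proof (rule limit_lemma[where a="\<lambda>n. real (card (A n))" and p="real (v + 1)" and q="2 ^ (v + 1)"])
      show "real (card (A n)) \<le> real (v + 1) * real (card (B n))" for n
      proof -
        have "real (card (A n)) \<le> real ((v + 1) * card (B n))" using Acard[of n] by (rule of_nat_mono)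
        thus ?thesis by (simp add: algebra_simps)
      qed
      show "real (card (B n)) \<le> 2 ^ (v + 1) * real (card (A (Suc n)))" for n
      proof -
        have "real (card (B n)) \<le> real (2 ^ (v + 1) * card (A (Suc n)))" using Bcard[of n] by (rule of_nat_mono)
        thus ?thesis by (simp add: algebra_simps)
      qed
    qed (use A1 B1 lim in auto)
    thus "(\<lambda>n. Dn (cliques V E) clique_adj C n) \<longlonglongrightarrow> D"
      unfolding Dn_def B_def Cl_def .
  qed
qed

end
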